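(* The class of halfspaces over $\mathbb{R}^2$ has a lossless compression scheme of size $5$ with respect to the comparison oracle (together with label queries), with the trivial inference rule.
   Context: A halfspace over $\mathbb{R}^2$ is $x\mapsto\mathrm{sign}(h(x))$ with $h(x)=\langle v,x\rangle+b$, $v\in S^1$, $b\in\mathbb{R}$ (label $1$ iff $h(x)\ge0$). A label query on $x$ returns its label; a comparison query on $x,x'$ returns whether $\langle x,v\rangle\ge\langle x',v\rangle$ (equivalently $h(x)\ge h(x')$). For $S\subseteq\mathbb{R}^2$, $Q_h(S)$ is the set of all combinations of valid responses to label and comparison queries on $S$, and $q(S)|_W$ its restriction to $W\subseteq S$. The label of $x$ is inferred by $q(S)$ if all halfspaces consistent with $q(S)$ give $x$ the same label; $I(q(S))$ is the set of such points. A lossless compression scheme of size $k$: for every halfspace $h$, every $S$ on which $h$'s label is constant, and every $q(S)\in Q_h(S)$, there is $W\subseteq S$ with $|W|\le k$ and $I(q(S))=I(q(S)|_W)$. *)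

theory Defs
  imports "HOL-Analysis.Analysis"
begin

type_synonym pt = "real^2"

definition is_halfspace :: "pt \<times> real \<Rightarrow> bool" where
  "is_halfspace h \<longleftrightarrow> norm (fst h) = 1"

definition hval :: "pt \<times> real \<Rightarrow> pt \<Rightarrow> real" where
  "hval h x = fst h \<bullet> x + snd h"

definition hlabel :: "pt \<times> real \<Rightarrow> pt \<Rightarrow> bool" where
  "hlabel h x \<longleftrightarrow> hval h x \<ge> 0"

definition hcmp :: "pt \<times> real \<Rightarrow> pt \<Rightarrow> pt \<Rightarrow> bool" where
  "hcmp h x x' \<longleftrightarrow> fst h \<bullet> x \<ge> fst h \<bullet> x'"

text \<open>A combination of responses: answers to label queries and to comparison queries.\<close>
type_synonym response = "(pt \<Rightarrow> bool) \<times> (pt \<Rightarrow> pt \<Rightarrow> bool)"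

text \<open>Q_h(S): all combinations of valid responses of h to label and comparison queries on S
  (only the answers on S, resp. S x S, are constrained).\<close>
definition Qh :: "pt \<times> real \<Rightarrow> pt set \<Rightarrow> response set" where
  "Qh h S = {(l, c). (\<forall>x\<in>S. l x = hlabel h x) \<and> (\<forall>x\<in>S. \<forall>x'\<in>S. c x x' = hcmp h x x')}"

text \<open>A halfspace h' is consistent with the responses q to the queries on W
  (so q restricted to W is represented by the pair W, q).\<close>
definition consistent :: "pt set \<Rightarrow> response \<Rightarrow> pt \<times> real \<Rightarrow> bool" where
  "consistent W q h' \<longleftrightarrow> is_halfspace h' \<and> q \<in> Qh h' W"

definition inferred :: "pt set \<Rightarrow> response \<Rightarrow> pt set" where
  "inferred W q = {x. \<forall>h1 h2. consistent W q h1 \<longrightarrow> consistent W q h2 \<longrightarrow>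
                        hlabel h1 x = hlabel h2 x}"

definition lossless_compression_scheme :: "nat \<Rightarrow> bool" where
  "lossless_compression_scheme k \<longleftrightarrow>
     (\<forall>h S q. is_halfspace h \<longrightarrow> finite S \<longrightarrow>
        (\<forall>x\<in>S. \<forall>y\<in>S. hlabel h x = hlabel h y) \<longrightarrow> q \<in> Qh h S \<longrightarrow>
        (\<exists>W \<subseteq> S. card W \<le> k \<and> inferred S q = inferred W q))"

end

theory Submission
  imports Defs
begin

lemma inner2: "(x::real^2) \<bullet> y = x$1*y$1 + x$2*y$2"
  by (simp add: inner_vec_def sum_2)

definition perp :: "real^2 \<Rightarrow> real^2 \<Rightarrow> real" where
  "perp v x = v$1* x$2 - v$2* x$1"

lemma decomp:
  fixes v w x :: "real^2"
  assumes "v \<bullet> v = 1"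
  shows "w \<bullet> x = (w \<bullet> v) * (v \<bullet> x) + perp v w * perp v x"
proof -
  have h: "v$1* v$1 + v$2* v$2 = 1" using assms by (simp add: inner2)
  have "w$1* x$1 + w$2* x$2 = (w$1* x$1 + w$2* x$2) * (v$1* v$1 + v$2* v$2)" using h by simp
  also have "\<dots> = (w$1* v$1 + w$2* v$2) * (v$1* x$1 + v$2* x$2) + (v$1* w$2 - v$2* w$1)*(v$1* x$2 - v$2* x$1)"
    by (simp add: algebra_simps)
  finally show ?thesis by (simp add: inner2 perp_def)
qed

lemma perp_diff: "perp v (x - y) = perp v x - perp v y"
  by (simp add: perp_def algebra_simps)

lemma eq_from_coords:
  fixes v x y :: "real^2"
  assumes "v \<bullet> v = 1" "v \<bullet> x = v \<bullet> y" "perp v x = perp v y"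
  shows "x = y"
proof -
  have "(x - y) \<bullet> (x - y) = ((x-y) \<bullet> v) * (v \<bullet> (x-y)) + perp v (x-y) * perp v (x-y)"
    using decomp[OF assms(1)] by blast
  also have "\<dots> = 0" using assms(2,3) by (simp add: perp_diff inner_diff_right inner_commute)
  finally show ?thesis by simp
qed

lemma agree_lin:
  fixes v w :: "real^2"
  assumes "v \<bullet> v = 1"
  shows "w \<bullet> y - w \<bullet> x = (w \<bullet> v) * (v \<bullet> y - v \<bullet> x) + perp v w * (perp v y - perp v x)"
  using decomp[OF assms, of w y] decomp[OF assms, of w x] by (simp add: algebra_simps)

lemma aux_div: "(D::real) \<noteq> 0 \<Longrightarrow> D * (a + c * (B / D)) = a * D + c * B"
  by (simp add: field_simps)

lemma order_compress:
  fixes v :: "real^2"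
  assumes v1: "v \<bullet> v = 1" and fin: "finite S"
  shows "\<exists>P\<subseteq>S. card P \<le> 4 \<and> (\<forall>w::real^2. (\<forall>x\<in>P. \<forall>y\<in>P. (v \<bullet> x \<ge> v \<bullet> y) = (w \<bullet> x \<ge> w \<bullet> y))
            \<longrightarrow> (\<forall>x\<in>S. \<forall>y\<in>S. (v \<bullet> x \<ge> v \<bullet> y) = (w \<bullet> x \<ge> w \<bullet> y)))"
proof (cases "\<exists>x0\<in>S. \<exists>x0'\<in>S. v \<bullet> x0 = v \<bullet> x0' \<and> x0 \<noteq> x0'")
  case True
  then obtain x0 x0' where x0: "x0 \<in> S" "x0' \<in> S" "v \<bullet> x0 = v \<bullet> x0'" "x0 \<noteq> x0'" by blast
  have bne: "perp v x0 \<noteq> perp v x0'" using eq_from_coords[OF v1 x0(3)] x0(4) by blast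
  have beta0: "perp v w = 0" if "v \<bullet> x0 \<ge> v \<bullet> x0' = (w \<bullet> x0 \<ge> w \<bullet> x0')"
      "v \<bullet> x0' \<ge> v \<bullet> x0 = (w \<bullet> x0' \<ge> w \<bullet> x0)" for w :: "real^2"
  proof -
    have "w \<bullet> x0 = w \<bullet> x0'" using that x0(3) by linarith
    then have "perp v w * (perp v x0 - perp v x0') = 0"
      using agree_lin[OF v1, of w x0' x0] x0(3) by auto
    then show ?thesis using bne by simp
  qed
  show ?thesis
  proof (cases "\<exists>x1\<in>S. \<exists>y1\<in>S. v \<bullet> x1 < v \<bullet> y1")
    case True
    then obtain x1 y1 where xy: "x1 \<in> S" "y1 \<in> S" "v \<bullet> x1 < v \<bullet> y1" by blast
    let ?P = "{x0, x0', x1, y1}"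
    have "card ?P \<le> 4" using card_length[of "[x0, x0', x1, y1]"] by simp
    moreover have "\<forall>w::real^2. (\<forall>x\<in>?P. \<forall>y\<in>?P. (v \<bullet> x \<ge> v \<bullet> y) = (w \<bullet> x \<ge> w \<bullet> y))
            \<longrightarrow> (\<forall>x\<in>S. \<forall>y\<in>S. (v \<bullet> x \<ge> v \<bullet> y) = (w \<bullet> x \<ge> w \<bullet> y))"
    proof (intro allI impI ballI)
      fix w :: "real^2" and x y
      assume A: "\<forall>x\<in>?P. \<forall>y\<in>?P. (v \<bullet> x \<ge> v \<bullet> y) = (w \<bullet> x \<ge> w \<bullet> y)" and xS: "x \<in> S" "y \<in> S"
      have b0: "perp v w = 0" using beta0 A by blast
      have lin: "w \<bullet> b - w \<bullet> a = (w \<bullet> v) * (v \<bullet> b - v \<bullet> a)" for a b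
        using agree_lin[OF v1, of w b a] b0 by simp
      have "\<not> (w \<bullet> x1 \<ge> w \<bullet> y1)" using A xy(3) by auto
      then have "(w \<bullet> v) * (v \<bullet> y1 - v \<bullet> x1) > 0" using lin[where a=x1 and b=y1] by simp
      then have apos: "w \<bullet> v > 0" using xy(3) by (simp add: zero_less_mult_iff)
      have "w \<bullet> x - w \<bullet> y = (w \<bullet> v) * (v \<bullet> x - v \<bullet> y)" using lin[where a=y and b=x] .
      then have "(w \<bullet> x \<ge> w \<bullet> y) = ((w \<bullet> v) * (v \<bullet> x - v \<bullet> y) \<ge> 0)" by linarith
      also have "\<dots> = (v \<bullet> x - v \<bullet> y \<ge> 0)" using apos by (simp add: zero_le_mult_iff)
      finally show "(v \<bullet> x \<ge> v \<bullet> y) = (w \<bullet> x \<ge> w \<bullet> y)" by linarith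
    qed
    moreover have "?P \<subseteq> S" using x0 xy by auto
    ultimately show ?thesis by blast
  next
    case False
    let ?P = "{x0, x0'}"
    have "card ?P \<le> 4" using card_length[of "[x0, x0']"] by simp
    moreover have "\<forall>w::real^2. (\<forall>x\<in>?P. \<forall>y\<in>?P. (v \<bullet> x \<ge> v \<bullet> y) = (w \<bullet> x \<ge> w \<bullet> y))
            \<longrightarrow> (\<forall>x\<in>S. \<forall>y\<in>S. (v \<bullet> x \<ge> v \<bullet> y) = (w \<bullet> x \<ge> w \<bullet> y))"
    proof (intro allI impI ballI)
      fix w :: "real^2" and x y
      assume A: "\<forall>x\<in>?P. \<forall>y\<in>?P. (v \<bullet> x \<ge> v \<bullet> y) = (w \<bullet> x \<ge> w \<bullet> y)" and xS: "x \<in> S" "y \<in> S"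
      have b0: "perp v w = 0" using beta0 A by blast
      have eq: "v \<bullet> x = v \<bullet> y" using False xS by (meson linorder_neqE_linordered_idom)
      have "w \<bullet> x - w \<bullet> y = (w \<bullet> v) * (v \<bullet> x - v \<bullet> y)"
        using agree_lin[OF v1, of w x y] b0 by simp
      then show "(v \<bullet> x \<ge> v \<bullet> y) = (w \<bullet> x \<ge> w \<bullet> y)" using eq by simp
    qed
    moreover have "?P \<subseteq> S" using x0 by auto
    ultimately show ?thesis by blast
  qed
next
  case False
  hence inj: "\<And>x y. x \<in> S \<Longrightarrow> y \<in> S \<Longrightarrow> v \<bullet> x = v \<bullet> y \<Longrightarrow> x = y" by blast
  define T where "T = {p \<in> S \<times> S. v \<bullet> fst p < v \<bullet> snd p}"
  define r where "r p = (perp v (snd p) - perp v (fst p)) / (v \<bullet> snd p - v \<bullet> fst p)" for p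
  show ?thesis
  proof (cases "T = {}")
    case True
    have "\<forall>x\<in>S. \<forall>y\<in>S. x = y"
    proof (intro ballI)
      fix x y assume "x \<in> S" "y \<in> S"
      then have "\<not> v \<bullet> x < v \<bullet> y" "\<not> v \<bullet> y < v \<bullet> x" using True unfolding T_def by auto
      then show "x = y" using inj \<open>x \<in> S\<close> \<open>y \<in> S\<close> by force
    qed
    then show ?thesis by (intro exI[of _ "{}"]) auto
  next
    case False
    have finT: "finite T" unfolding T_def using fin by (auto intro: finite_subset[of _ "S \<times> S"])
    have "Max (r ` T) \<in> r ` T" using Max_in[of "r ` T"] finT False by auto
    then obtain p1 where p1: "p1 \<in> T" "r p1 = Max (r ` T)" by (metis imageE)
    have "Min (r ` T) \<in> r ` T" using Min_in[of "r ` T"] finT False by auto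
    then obtain p2 where p2: "p2 \<in> T" "r p2 = Min (r ` T)" by (metis imageE)
    have rle: "r p \<le> r p1" "r p2 \<le> r p" if "p \<in> T" for p
      using that p1 p2 finT by auto
    let ?P = "{fst p1, snd p1, fst p2, snd p2}"
    have "card ?P \<le> 4" using card_length[of "[fst p1, snd p1, fst p2, snd p2]"] by simp
    moreover have "?P \<subseteq> S" using p1(1) p2(1) unfolding T_def by auto
    moreover have "\<forall>w::real^2. (\<forall>x\<in>?P. \<forall>y\<in>?P. (v \<bullet> x \<ge> v \<bullet> y) = (w \<bullet> x \<ge> w \<bullet> y))
            \<longrightarrow> (\<forall>x\<in>S. \<forall>y\<in>S. (v \<bullet> x \<ge> v \<bullet> y) = (w \<bullet> x \<ge> w \<bullet> y))"
    proof (intro allI impI)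
      fix w :: "real^2"
      assume A: "\<forall>x\<in>?P. \<forall>y\<in>?P. (v \<bullet> x \<ge> v \<bullet> y) = (w \<bullet> x \<ge> w \<bullet> y)"
      have key: "w \<bullet> snd p - w \<bullet> fst p = (v \<bullet> snd p - v \<bullet> fst p) * ((w \<bullet> v) + perp v w * r p)"
        if "p \<in> T" for p
      proof -
        have "v \<bullet> snd p - v \<bullet> fst p > 0" using that unfolding T_def by auto
        then have "(v \<bullet> snd p - v \<bullet> fst p) * ((w \<bullet> v) + perp v w * r p)
          = (w \<bullet> v) * (v \<bullet> snd p - v \<bullet> fst p) + perp v w * (perp v (snd p) - perp v (fst p))"
          unfolding r_def using aux_div[of "v \<bullet> snd p - v \<bullet> fst p"] by simp
        then show ?thesis using agree_lin[OF v1, of w "snd p" "fst p"] by simp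
      qed
      have pos1: "(w \<bullet> v) + perp v w * r p1 > 0"
      proof -
        have d: "v \<bullet> snd p1 - v \<bullet> fst p1 > 0" using p1(1) unfolding T_def by auto
        have "w \<bullet> snd p1 - w \<bullet> fst p1 > 0" using A p1(1) unfolding T_def by auto
        then show ?thesis using key[OF p1(1)] d by (simp add: zero_less_mult_iff)
      qed
      have pos2: "(w \<bullet> v) + perp v w * r p2 > 0"
      proof -
        have d: "v \<bullet> snd p2 - v \<bullet> fst p2 > 0" using p2(1) unfolding T_def by auto
        have "w \<bullet> snd p2 - w \<bullet> fst p2 > 0" using A p2(1) unfolding T_def by auto
        then show ?thesis using key[OF p2(1)] d by (simp add: zero_less_mult_iff)
      qed
      have strict: "w \<bullet> x < w \<bullet> y" if "x \<in> S" "y \<in> S" "v \<bullet> x < v \<bullet> y" for x y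
      proof -
        have pT: "(x, y) \<in> T" using that unfolding T_def by auto
        have "(w \<bullet> v) + perp v w * r (x,y) > 0"
        proof (cases "perp v w \<ge> 0")
          case True
          then have "perp v w * r p2 \<le> perp v w * r (x,y)" using rle(2)[OF pT] by (simp add: mult_left_mono)
          then show ?thesis using pos2 by linarith
        next
          case False
          then have "perp v w * r p1 \<le> perp v w * r (x,y)" using rle(1)[OF pT]
            by (simp add: mult_left_mono_neg)
          then show ?thesis using pos1 by linarith
        qed
        then have "w \<bullet> y - w \<bullet> x > 0" using key[OF pT] that(3) by simp
        then show ?thesis by simp
      qed
      show "\<forall>x\<in>S. \<forall>y\<in>S. (v \<bullet> x \<ge> v \<bullet> y) = (w \<bullet> x \<ge> w \<bullet> y)"
      proof (intro ballI)
        fix x y assume xy: "x \<in> S" "y \<in> S"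
        consider "v \<bullet> x < v \<bullet> y" | "v \<bullet> y < v \<bullet> x" | "v \<bullet> x = v \<bullet> y" by linarith
        then show "(v \<bullet> x \<ge> v \<bullet> y) = (w \<bullet> x \<ge> w \<bullet> y)"
        proof cases
          case 1 then show ?thesis using strict[OF xy 1] by simp
        next
          case 2 then show ?thesis using strict[OF xy(2,1) 2] by simp
        next
          case 3 then show ?thesis using inj[OF xy 3] by simp
        qed
      qed
    qed
    ultimately show ?thesis by blast
  qed
qed

theorem proposition4p6:
  shows "lossless_compression_scheme 5"
  unfolding lossless_compression_scheme_def
proof (intro allI impI)
  fix h :: "pt \<times> real" and S q
  assume hs: "is_halfspace h" and fin: "finite S"
    and lab: "\<forall>x\<in>S. \<forall>y\<in>S. hlabel h x = hlabel h y" and qS: "q \<in> Qh h S"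
  obtain v b0 where h: "h = (v, b0)" by fastforce
  obtain l c where q: "q = (l, c)" by fastforce
  have v1: "v \<bullet> v = 1" using hs h by (simp add: is_halfspace_def norm_eq_1)
  show "\<exists>W\<subseteq>S. card W \<le> 5 \<and> inferred S q = inferred W q"
  proof (cases "S = {}")
    case True then show ?thesis by auto
  next
    case False
    then obtain s where s: "s \<in> S" by blast
    define L where "L = hlabel h s"
    have labL: "hlabel h x = L" if "x \<in> S" for x using lab that s L_def by blast
    obtain m where m: "m \<in> S" "L \<longrightarrow> (\<forall>x\<in>S. v \<bullet> m \<le> v \<bullet> x)" "\<not> L \<longrightarrow> (\<forall>x\<in>S. v \<bullet> x \<le> v \<bullet> m)"
    proof (cases L)
      case True
      have "Min ((\<lambda>x. v \<bullet> x) ` S) \<in> (\<lambda>x. v \<bullet> x) ` S" using fin \<open>S \<noteq> {}\<close> by simp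
      then obtain m where "m \<in> S" "v \<bullet> m = Min ((\<lambda>x. v \<bullet> x) ` S)" by (metis imageE)
      then have "m \<in> S" "\<forall>x\<in>S. v \<bullet> m \<le> v \<bullet> x" using fin by auto
      then show ?thesis using that True by blast
    next
      case False
      have "Max ((\<lambda>x. v \<bullet> x) ` S) \<in> (\<lambda>x. v \<bullet> x) ` S" using fin \<open>S \<noteq> {}\<close> by simp
      then obtain m where "m \<in> S" "v \<bullet> m = Max ((\<lambda>x. v \<bullet> x) ` S)" by (metis imageE)
      then have "m \<in> S" "\<forall>x\<in>S. v \<bullet> x \<le> v \<bullet> m" using fin by auto
      then show ?thesis using that False by blast
    qed
    obtain P where P: "P \<subseteq> S" "card P \<le> 4"
      "\<forall>w::real^2. (\<forall>x\<in>P. \<forall>y\<in>P. (v \<bullet> x \<ge> v \<bullet> y) = (w \<bullet> x \<ge> w \<bullet> y))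
            \<longrightarrow> (\<forall>x\<in>S. \<forall>y\<in>S. (v \<bullet> x \<ge> v \<bullet> y) = (w \<bullet> x \<ge> w \<bullet> y))"
      using order_compress[OF v1 fin] by blast
    define W where "W = insert m P"
    have WS: "W \<subseteq> S" using P(1) m(1) W_def by auto
    have finP: "finite P" using P(1) fin finite_subset by blast
    have cW: "card W \<le> 5" unfolding W_def using P(2) finP
      by (simp add: card_insert_if)
    have cons: "consistent S q h' \<longleftrightarrow> consistent W q h'" for h'
    proof
      assume "consistent S q h'" then show "consistent W q h'"
        using WS unfolding consistent_def Qh_def by blast
    next
      assume cW': "consistent W q h'"
      obtain v' b' where h': "h' = (v', b')" by fastforce
      have qW': "\<forall>x\<in>W. l x = hlabel h' x" "\<forall>x\<in>W. \<forall>x'\<in>W. c x x' = hcmp h' x x'"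
        using cW' q unfolding consistent_def Qh_def by auto
      have qS': "\<forall>x\<in>S. l x = hlabel h x" "\<forall>x\<in>S. \<forall>x'\<in>S. c x x' = hcmp h x x'"
        using qS q unfolding Qh_def by auto
      have agP: "\<forall>x\<in>P. \<forall>y\<in>P. (v \<bullet> x \<ge> v \<bullet> y) = (v' \<bullet> x \<ge> v' \<bullet> y)"
      proof (intro ballI)
        fix x y assume xy: "x \<in> P" "y \<in> P"
        have "c x y = hcmp h x y" using qS'(2) xy P(1) by blast
        moreover have "c x y = hcmp h' x y" using qW'(2) xy W_def by blast
        ultimately show "(v \<bullet> x \<ge> v \<bullet> y) = (v' \<bullet> x \<ge> v' \<bullet> y)"
          using h h' unfolding hcmp_def by simp
      qed
      have agS: "\<forall>x\<in>S. \<forall>y\<in>S. (v \<bullet> x \<ge> v \<bullet> y) = (v' \<bullet> x \<ge> v' \<bullet> y)"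
        using P(3) agP by blast
      have cmpS: "\<forall>x\<in>S. \<forall>x'\<in>S. c x x' = hcmp h' x x'"
        using qS'(2) agS h h' unfolding hcmp_def by auto
      have mlab: "hlabel h' m = L" using qW'(1) qS'(1) labL m(1) W_def by auto
      have labS: "\<forall>x\<in>S. l x = hlabel h' x"
      proof
        fix x assume xS: "x \<in> S"
        have lx: "l x = L" using qS'(1) labL xS by auto
        show "l x = hlabel h' x"
        proof (cases L)
          case True
          then have "v \<bullet> m \<le> v \<bullet> x" using m(2) xS by auto
          then have "v' \<bullet> m \<le> v' \<bullet> x" using agS xS m(1) by blast
          then show ?thesis using mlab True lx h' unfolding hlabel_def hval_def by auto
        next
          case False
          then have "v \<bullet> x \<le> v \<bullet> m" using m(3) xS by auto
          then have "v' \<bullet> x \<le> v' \<bullet> m" using agS xS m(1) by blast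
          then show ?thesis using mlab False lx h' unfolding hlabel_def hval_def by auto
        qed
      qed
      show "consistent S q h'" using cW' labS cmpS q unfolding consistent_def Qh_def by auto
    qed
    have "inferred S q = inferred W q" unfolding inferred_def using cons by simp
    then show ?thesis using WS cW by blast
  qed
qed
end
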